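(* Let $\delta_1,\delta_2$ be diagonal sections of 2-copulas. (a) For $i=1,2$ let $C_i(u_1,u_2)=\min\{u_1,u_2,(\delta_i(u_1)+\delta_i(u_2))/2\}$ be the Fredricks–Nelsen copulas. (b) Alternatively, for $i=1,2$ let $C_i$ be the Bertino copulas $C_i(u_1,u_2)=u_1-\min_{t\in[u_1,u_2]}(t-\delta_i(t))$ if $u_1\le u_2$ and $C_i(u_1,u_2)=u_2-\min_{t\in[u_2,u_1]}(t-\delta_i(t))$ if $u_2\le u_1$. In either case (a) or (b), if $C_1,C_2$ admit tail dependence functions and $C_1<_{TD}C_2$, then $C_1\le_{loc}C_2$.
   Context: A 2-copula is a grounded, 2-increasing function $C:[0,1]^2\to[0,1]$ with uniform margins; its diagonal section is $\delta(t)=C(t,t)$. The Fredricks–Nelsen and Bertino functions defined from the diagonal section of any 2-copula are 2-copulas with that diagonal. Tail dependence function: $\Lambda(\boldsymbol w;C)=\lim_{s\searrow0}C(s\boldsymbol w)/s$, $\boldsymbol w\in[0,\infty)^2$. $C_1<_{TD}C_2$ means $\Lambda(\boldsymbol w;C_1)<\Lambda(\boldsymbol w;C_2)$ for all $\boldsymbol w\in(0,\infty)^2$. $C_1\le_{loc}C_2$ means there is $\varepsilon>0$ with $C_1(\boldsymbol u)\le C_2(\boldsymbol u)$ for all $\boldsymbol u\in B_\varepsilon(\boldsymbol 0)\cap[0,1]^2$ (Euclidean ball). *)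

theory Defs
  imports "HOL-Analysis.Analysis"
begin

text \<open>A 2-copula: grounded, 2-increasing, uniform margins, values in [0,1] on the unit square.
  Only the values on [0,1]^2 are constrained.\<close>
definition copula2 :: "(real \<Rightarrow> real \<Rightarrow> real) \<Rightarrow> bool" where
  "copula2 C \<longleftrightarrow>
     (\<forall>u\<in>{0..1}. \<forall>v\<in>{0..1}. C u v \<in> {0..1}) \<and>
     (\<forall>u\<in>{0..1}. C u 0 = 0 \<and> C 0 u = 0) \<and>
     (\<forall>u\<in>{0..1}. C u 1 = u \<and> C 1 u = u) \<and>
     (\<forall>u1 u2 v1 v2. 0 \<le> u1 \<and> u1 \<le> u2 \<and> u2 \<le> 1 \<and> 0 \<le> v1 \<and> v1 \<le> v2 \<and> v2 \<le> 1 \<longrightarrow>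
        C u2 v2 - C u2 v1 - C u1 v2 + C u1 v1 \<ge> 0)"

definition diag_section :: "(real \<Rightarrow> real) \<Rightarrow> bool" where
  "diag_section \<delta> \<longleftrightarrow> (\<exists>C. copula2 C \<and> (\<forall>t\<in>{0..1}. \<delta> t = C t t))"

definition FN_copula :: "(real \<Rightarrow> real) \<Rightarrow> real \<Rightarrow> real \<Rightarrow> real" where
  "FN_copula \<delta> u1 u2 = min u1 (min u2 ((\<delta> u1 + \<delta> u2) / 2))"

text \<open>Bertino copula; the minimum over a compact interval of the continuous function
  t - delta t is written as an infimum (it is attained).\<close>
definition Bertino_copula :: "(real \<Rightarrow> real) \<Rightarrow> real \<Rightarrow> real \<Rightarrow> real" where
  "Bertino_copula \<delta> u1 u2 =
     (if u1 \<le> u2 then u1 - Inf ((\<lambda>t. t - \<delta> t) ` {u1..u2})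
      else u2 - Inf ((\<lambda>t. t - \<delta> t) ` {u2..u1}))"

definition has_tdf :: "(real \<Rightarrow> real \<Rightarrow> real) \<Rightarrow> bool" where
  "has_tdf C \<longleftrightarrow> (\<forall>w1 w2. 0 \<le> w1 \<and> 0 \<le> w2 \<longrightarrow>
      (\<exists>L. ((\<lambda>s. C (s * w1) (s * w2) / s) \<longlongrightarrow> L) (at_right 0)))"

definition tdf :: "(real \<Rightarrow> real \<Rightarrow> real) \<Rightarrow> real \<Rightarrow> real \<Rightarrow> real" where
  "tdf C w1 w2 = Lim (at_right 0) (\<lambda>s. C (s * w1) (s * w2) / s)"

definition td_less :: "(real \<Rightarrow> real \<Rightarrow> real) \<Rightarrow> (real \<Rightarrow> real \<Rightarrow> real) \<Rightarrow> bool" where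
  "td_less C1 C2 \<longleftrightarrow> (\<forall>w1 w2. 0 < w1 \<and> 0 < w2 \<longrightarrow> tdf C1 w1 w2 < tdf C2 w1 w2)"

definition loc_le :: "(real \<Rightarrow> real \<Rightarrow> real) \<Rightarrow> (real \<Rightarrow> real \<Rightarrow> real) \<Rightarrow> bool" where
  "loc_le C1 C2 \<longleftrightarrow> (\<exists>\<epsilon>>0. \<forall>u1\<in>{0..1}. \<forall>u2\<in>{0..1}.
      sqrt (u1\<^sup>2 + u2\<^sup>2) < \<epsilon> \<longrightarrow> C1 u1 u2 \<le> C2 u1 u2)"

end

theory Submission
  imports Defs
begin

lemma diag_props:
  assumes "diag_section \<delta>" "t \<in> {0..1}"
  shows "0 \<le> \<delta> t \<and> \<delta> t \<le> t"
proof -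
  obtain C where C: "copula2 C" "\<forall>t\<in>{0..1}. \<delta> t = C t t"
    using assms(1) unfolding diag_section_def by blast
  have r: "C t t \<in> {0..1}" using C(1) assms(2) unfolding copula2_def by blast
  have m: "C t 1 - C t t - C 0 1 + C 0 t \<ge> 0"
  proof -
    have "\<forall>u1 u2 v1 v2. 0 \<le> u1 \<and> u1 \<le> u2 \<and> u2 \<le> 1 \<and> 0 \<le> v1 \<and> v1 \<le> v2 \<and> v2 \<le> 1 \<longrightarrow>
        C u2 v2 - C u2 v1 - C u1 v2 + C u1 v1 \<ge> 0" using C(1) unfolding copula2_def by blast
    then have "0 \<le> (0::real) \<and> 0 \<le> t \<and> t \<le> 1 \<and> 0 \<le> t \<and> t \<le> (1::real) \<and> (1::real) \<le> 1 \<longrightarrow>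
        C t 1 - C t t - C 0 1 + C 0 t \<ge> 0" by blast
    then show ?thesis using assms(2) by simp
  qed
  have "C t 1 = t" "C 0 1 = 0" "C 0 t = 0"
    using C(1) assms(2) unfolding copula2_def by auto
  then show ?thesis using r m C(2) assms(2) by auto
qed

lemma diag_zero: "diag_section \<delta> \<Longrightarrow> \<delta> 0 = 0"
  using diag_props[of \<delta> 0] by auto

lemma FN_diag: "diag_section \<delta> \<Longrightarrow> t \<in> {0..1} \<Longrightarrow> FN_copula \<delta> t t = \<delta> t"
  using diag_props[of \<delta> t] unfolding FN_copula_def by auto

lemma B_diag: "Bertino_copula \<delta> t t = \<delta> t"
  unfolding Bertino_copula_def by simp

lemma diag_lim:
  assumes "has_tdf C" "\<forall>t\<in>{0..1}. C t t = \<delta> t"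
  shows "((\<lambda>s. \<delta> s / s) \<longlongrightarrow> tdf C 1 1) (at_right 0)"
proof -
  obtain L where L: "((\<lambda>s. C (s * 1) (s * 1) / s) \<longlongrightarrow> L) (at_right (0::real))"
  proof -
    have "\<exists>L. ((\<lambda>s. C (s * 1) (s * 1) / s) \<longlongrightarrow> L) (at_right (0::real))"
      using assms(1) unfolding has_tdf_def by (metis zero_le_one)
    then show ?thesis using that by blast
  qed
  have "tdf C 1 1 = L" unfolding tdf_def using L tendsto_Lim by force
  moreover have ev: "eventually (\<lambda>s. C (s * 1) (s * 1) / s = \<delta> s / s) (at_right (0::real))"
  proof (rule eventually_mono[OF eventually_at_right_real[of 0 1]])
    fix x :: real assume "x \<in> {0<..<1}"
    then show "C (x * 1) (x * 1) / x = \<delta> x / x" using assms(2) by simp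
  qed simp
  have "((\<lambda>s. \<delta> s / s) \<longlongrightarrow> L) (at_right 0)"
    using tendsto_cong[OF ev] L by simp
  ultimately show ?thesis by simp
qed

lemma eps_lemma:
  assumes "diag_section \<delta>1" "diag_section \<delta>2"
    "((\<lambda>s. \<delta>1 s / s) \<longlongrightarrow> L1) (at_right 0)"
    "((\<lambda>s. \<delta>2 s / s) \<longlongrightarrow> L2) (at_right 0)" "L1 < L2"
  shows "\<exists>\<epsilon>>0. \<epsilon> \<le> 1 \<and> (\<forall>t. 0 \<le> t \<and> t < \<epsilon> \<longrightarrow> \<delta>1 t \<le> \<delta>2 t)"
proof -
  define m where "m = (L1 + L2) / 2"
  have "eventually (\<lambda>s. \<delta>1 s / s < m) (at_right 0)"
    using order_tendstoD(2)[OF assms(3)] assms(5) m_def by auto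
  moreover have "eventually (\<lambda>s. m < \<delta>2 s / s) (at_right 0)"
    using order_tendstoD(1)[OF assms(4)] assms(5) m_def by auto
  ultimately have "eventually (\<lambda>s. \<delta>1 s / s < \<delta>2 s / s) (at_right (0::real))"
    by eventually_elim auto
  then obtain b where b: "b > 0" "\<forall>y>0. y < b \<longrightarrow> \<delta>1 y / y < \<delta>2 y / y"
    unfolding eventually_at_right_field by auto
  show ?thesis
  proof (intro exI[of _ "min b 1"] conjI allI impI)
    fix t :: real assume t: "0 \<le> t \<and> t < min b 1"
    show "\<delta>1 t \<le> \<delta>2 t"
    proof (cases "t = 0")
      case True then show ?thesis using diag_zero[OF assms(1)] diag_zero[OF assms(2)] by simp
    next
      case False
      then have "\<delta>1 t / t < \<delta>2 t / t" using b t by auto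
      then show ?thesis using False t by (simp add: divide_strict_right_mono_neg field_simps)
    qed
  qed (use b in auto)
qed

lemma ball_small:
  assumes "sqrt (u1\<^sup>2 + u2\<^sup>2) < \<epsilon>" "0 \<le> u1" "0 \<le> u2"
  shows "u1 < \<epsilon> \<and> u2 < \<epsilon>"
proof -
  have "u1 = sqrt (u1\<^sup>2)" "u2 = sqrt (u2\<^sup>2)" using assms by auto
  moreover have "sqrt (u1\<^sup>2) \<le> sqrt (u1\<^sup>2 + u2\<^sup>2)" "sqrt (u2\<^sup>2) \<le> sqrt (u1\<^sup>2 + u2\<^sup>2)"
    by (auto intro: real_sqrt_le_mono)
  ultimately show ?thesis using assms(1) by linarith
qed

lemma Inf_mono_aux:
  fixes f g :: "real \<Rightarrow> real"
  assumes "a \<le> b" "\<forall>t\<in>{a..b}. g t \<le> f t" "\<forall>t\<in>{a..b}. 0 \<le> g t"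
  shows "Inf (g ` {a..b}) \<le> Inf (f ` {a..b})"
proof -
  have bdd: "bdd_below (g ` {a..b})" using assms(3) by (auto intro: bdd_belowI2)
  show ?thesis
  proof (rule cINF_greatest)
    show "{a..b} \<noteq> {}" using assms(1) by simp
    fix x assume x: "x \<in> {a..b}"
    have "Inf (g ` {a..b}) \<le> g x" using bdd x by (rule cINF_lower)
    then show "Inf (g ` {a..b}) \<le> f x" using assms(2) x by force
  qed
qed

lemma B_mono:
  assumes "diag_section \<delta>2" "u1 \<in> {0..1}" "u2 \<in> {0..1}"
    "\<forall>t. 0 \<le> t \<and> t \<le> max u1 u2 \<longrightarrow> \<delta>1 t \<le> \<delta>2 t"
  shows "Bertino_copula \<delta>1 u1 u2 \<le> Bertino_copula \<delta>2 u1 u2"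
proof -
  have g0: "\<forall>t\<in>{a..b}. 0 \<le> t - \<delta>2 t" if "0 \<le> a" "b \<le> 1" for a b
    using diag_props[OF assms(1)] that by force
  have le: "\<forall>t\<in>{a..b}. t - \<delta>2 t \<le> t - \<delta>1 t" if "0 \<le> a" "b \<le> max u1 u2" for a b
    using assms(4) that by force
  show ?thesis
  proof (cases "u1 \<le> u2")
    case True
    have "Inf ((\<lambda>t. t - \<delta>2 t) ` {u1..u2}) \<le> Inf ((\<lambda>t. t - \<delta>1 t) ` {u1..u2})"
      by (rule Inf_mono_aux) (use True assms g0 le in auto)
    then show ?thesis using True unfolding Bertino_copula_def by simp
  next
    case False
    have "Inf ((\<lambda>t. t - \<delta>2 t) ` {u2..u1}) \<le> Inf ((\<lambda>t. t - \<delta>1 t) ` {u2..u1})"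
      by (rule Inf_mono_aux) (use False assms g0 le in auto)
    then show ?thesis using False unfolding Bertino_copula_def by simp
  qed
qed

lemma FN_mono:
  assumes "\<delta>1 u1 \<le> \<delta>2 u1" "\<delta>1 u2 \<le> \<delta>2 u2"
  shows "FN_copula \<delta>1 u1 u2 \<le> FN_copula \<delta>2 u1 u2"
  unfolding FN_copula_def by (intro min.mono order_refl) (use assms in simp)

theorem mainTheorem7:
  fixes \<delta>1 \<delta>2 :: "real \<Rightarrow> real"
  assumes "diag_section \<delta>1" and "diag_section \<delta>2"
  shows "(has_tdf (FN_copula \<delta>1) \<and> has_tdf (FN_copula \<delta>2) \<and>
            td_less (FN_copula \<delta>1) (FN_copula \<delta>2)
          \<longrightarrow> loc_le (FN_copula \<delta>1) (FN_copula \<delta>2)) \<and>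
         (has_tdf (Bertino_copula \<delta>1) \<and> has_tdf (Bertino_copula \<delta>2) \<and>
            td_less (Bertino_copula \<delta>1) (Bertino_copula \<delta>2)
          \<longrightarrow> loc_le (Bertino_copula \<delta>1) (Bertino_copula \<delta>2))"
proof (intro conjI impI)
  assume h: "has_tdf (FN_copula \<delta>1) \<and> has_tdf (FN_copula \<delta>2) \<and>
            td_less (FN_copula \<delta>1) (FN_copula \<delta>2)"
  have l1: "((\<lambda>s. \<delta>1 s / s) \<longlongrightarrow> tdf (FN_copula \<delta>1) 1 1) (at_right 0)"
    using diag_lim[of "FN_copula \<delta>1" \<delta>1] h FN_diag[OF assms(1)] by blast
  have l2: "((\<lambda>s. \<delta>2 s / s) \<longlongrightarrow> tdf (FN_copula \<delta>2) 1 1) (at_right 0)"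
    using diag_lim[of "FN_copula \<delta>2" \<delta>2] h FN_diag[OF assms(2)] by blast
  have "tdf (FN_copula \<delta>1) 1 1 < tdf (FN_copula \<delta>2) 1 1"
    using h unfolding td_less_def by simp
  from eps_lemma[OF assms l1 l2 this] obtain \<epsilon> where
    e: "\<epsilon> > 0" "\<forall>t. 0 \<le> t \<and> t < \<epsilon> \<longrightarrow> \<delta>1 t \<le> \<delta>2 t" by blast
  show "loc_le (FN_copula \<delta>1) (FN_copula \<delta>2)"
    unfolding loc_le_def
  proof (intro exI[of _ \<epsilon>] conjI ballI impI)
    fix u1 u2 :: real assume u: "u1 \<in> {0..1}" "u2 \<in> {0..1}" "sqrt (u1\<^sup>2 + u2\<^sup>2) < \<epsilon>"
    then have uu: "u1 < \<epsilon> \<and> u2 < \<epsilon>" using ball_small[of u1 u2 \<epsilon>] by simp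
    show "FN_copula \<delta>1 u1 u2 \<le> FN_copula \<delta>2 u1 u2"
    proof (rule FN_mono)
      show "\<delta>1 u1 \<le> \<delta>2 u1" using u(1) uu e(2) by simp
      show "\<delta>1 u2 \<le> \<delta>2 u2" using u(2) uu e(2) by simp
    qed
  qed (rule e(1))
next
  assume h: "has_tdf (Bertino_copula \<delta>1) \<and> has_tdf (Bertino_copula \<delta>2) \<and>
            td_less (Bertino_copula \<delta>1) (Bertino_copula \<delta>2)"
  have l1: "((\<lambda>s. \<delta>1 s / s) \<longlongrightarrow> tdf (Bertino_copula \<delta>1) 1 1) (at_right 0)"
    using diag_lim[of "Bertino_copula \<delta>1" \<delta>1] h B_diag by blast
  have l2: "((\<lambda>s. \<delta>2 s / s) \<longlongrightarrow> tdf (Bertino_copula \<delta>2) 1 1) (at_right 0)"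
    using diag_lim[of "Bertino_copula \<delta>2" \<delta>2] h B_diag by blast
  have "tdf (Bertino_copula \<delta>1) 1 1 < tdf (Bertino_copula \<delta>2) 1 1"
    using h unfolding td_less_def by simp
  from eps_lemma[OF assms l1 l2 this] obtain \<epsilon> where
    e: "\<epsilon> > 0" "\<forall>t. 0 \<le> t \<and> t < \<epsilon> \<longrightarrow> \<delta>1 t \<le> \<delta>2 t" by blast
  show "loc_le (Bertino_copula \<delta>1) (Bertino_copula \<delta>2)"
    unfolding loc_le_def
  proof (intro exI[of _ \<epsilon>] conjI ballI impI)
    fix u1 u2 :: real assume u: "u1 \<in> {0..1}" "u2 \<in> {0..1}" "sqrt (u1\<^sup>2 + u2\<^sup>2) < \<epsilon>"
    then have uu: "u1 < \<epsilon> \<and> u2 < \<epsilon>" using ball_small[of u1 u2 \<epsilon>] by simp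
    show "Bertino_copula \<delta>1 u1 u2 \<le> Bertino_copula \<delta>2 u1 u2"
    proof (rule B_mono[OF assms(2) u(1,2)], intro allI impI)
      fix t assume "0 \<le> t \<and> t \<le> max u1 u2"
      then show "\<delta>1 t \<le> \<delta>2 t" using uu e(2) by auto
    qed
  qed (rule e(1))
qed

end
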